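(* Let $3\le d\le 50$, let $(\alpha,\beta)\in\mathcal{A}_d$, let $\ell>1000$ be a prime, and let $(y_1,y_2)$ be integers satisfying \[ 4\beta y_2^\ell-\alpha^2 y_1^{2\ell}=d^2-1, \] with $|y_1|\ge 2$, $y_2\ge 2$ and $y_2\ne y_1^2$. Let $A_2=\max\{y_1^2,y_2\}$. Then \[ 1\le \frac{\log A_2}{\log y_1^2}\le 1.03 . \]
   Context: For a prime $q$ let $\mu_q=\operatorname{ord}_q(d^2-1)$ and $\nu_q=\operatorname{ord}_q(d)$. To each prime $q$ associate a finite set $T_q\subset\mathbb{Z}^2$: if $q\nmid d(d^2-1)$, $T_q=\{(0,0)\}$. For $q=2$: $T_2=\{(0,1-\nu_2)\}$ if $2\mid d$; $T_2=\{(1,0),(\mu_2/2,1-\mu_2/2),(3-\mu_2,\mu_2-2)\}$ if $2\nmid d$ and $\mu_2$ is even; $T_2=\{(1,0),(3-\mu_2,\mu_2-2)\}$ if $2\nmid d$ and $\mu_2$ is odd. For odd $q\mid d$: $T_q=\{(-\nu_q,0),(0,-\nu_q)\}$. For odd $q\mid d^2-1$: $T_q=\{(0,0),(-\mu_q,\mu_q),(\mu_q/2,-\mu_q/2)\}$ if $\mu_q$ is even, and $T_q=\{(0,0),(-\mu_q,\mu_q)\}$ if $\mu_q$ is odd. Then $\mathcal{A}_d$ is the set of pairs of positive rationals $(\alpha,\beta)$ with $(\operatorname{ord}_q(\alpha),\operatorname{ord}_q(\beta))\in T_q$ for every prime $q$. *)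

theory Defs
  imports "HOL-Analysis.Analysis" "HOL-Computational_Algebra.Primes"
begin

definition rat_ord :: "int \<Rightarrow> rat \<Rightarrow> int" where
  "rat_ord q r = (case quotient_of r of (a, b) \<Rightarrow>
      int (multiplicity q a) - int (multiplicity q b))"

definition T_set :: "int \<Rightarrow> int \<Rightarrow> (int \<times> int) set" where
  "T_set d q = (let mu = int (multiplicity q (d^2 - 1)); nu = int (multiplicity q d) in
     if \<not> q dvd d * (d^2 - 1) then {(0, 0)}
     else if q = 2 then
       (if 2 dvd d then {(0, 1 - nu)}
        else if even mu then {(1, 0), (mu div 2, 1 - mu div 2), (3 - mu, mu - 2)}
        else {(1, 0), (3 - mu, mu - 2)})
     else if q dvd d then {(-nu, 0), (0, -nu)}
     else if even mu then {(0, 0), (-mu, mu), (mu div 2, -(mu div 2))}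
     else {(0, 0), (-mu, mu)})"

definition A_set :: "int \<Rightarrow> (rat \<times> rat) set" where
  "A_set d = {(\<alpha>, \<beta>). \<alpha> > 0 \<and> \<beta> > 0 \<and>
      (\<forall>q::int. prime q \<longrightarrow> (rat_ord q \<alpha>, rat_ord q \<beta>) \<in> T_set d q)}"

end

theory Submission
  imports Defs
begin


lemma coprime_mult_zero:
  fixes a b q :: int
  assumes "prime q" "coprime a b"
  shows "multiplicity q a = 0 \<or> multiplicity q b = 0"
proof (rule ccontr)
  assume "\<not> ?thesis"
  hence m: "multiplicity q a \<noteq> 0" "multiplicity q b \<noteq> 0" by simp_all
  have "q dvd a" using not_dvd_imp_multiplicity_0[of q a] m(1) by blast
  moreover have "q dvd b" using not_dvd_imp_multiplicity_0[of q b] m(2) by blast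
  ultimately have "is_unit q" by (rule coprime_common_divisor[OF assms(2)])
  thus False using not_prime_unit assms(1) by blast
qed

lemma num_bound:
  fixes r :: rat and N :: int
  assumes "r > 0" "N > 0"
    and "\<And>q. prime q \<Longrightarrow> rat_ord q r \<le> int (multiplicity q N)"
  shows "r \<le> of_int N"
proof -
  obtain a b where qa: "quotient_of r = (a, b)" by (cases "quotient_of r") auto
  have b: "b > 0" using quotient_of_denom_pos[OF qa] .
  have cop: "coprime a b" using quotient_of_coprime[OF qa] .
  have rr: "r = of_int a / of_int b" using quotient_of_div[OF qa] .
  have a: "a > 0" using assms(1) b rr by (simp add: zero_less_divide_iff)
  have "a dvd N"
  proof (rule multiplicity_le_imp_dvd)
    show "a \<noteq> 0" using a by simp
    fix q :: int assume q: "prime q"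
    have "rat_ord q r = int (multiplicity q a) - int (multiplicity q b)"
      by (simp add: rat_ord_def qa)
    thus "multiplicity q a \<le> multiplicity q N"
      using assms(3)[OF q] coprime_mult_zero[OF q cop] by auto
  qed
  hence "a \<le> N" using assms(2) by (simp add: zdvd_imp_le)
  have "r \<le> of_int a" using rr b a by (simp add: divide_le_eq)
  thus ?thesis using \<open>a \<le> N\<close> by (meson of_int_le_iff order_trans)
qed

lemma den_bound:
  fixes r :: rat and N :: int
  assumes "r > 0" "N > 0"
    and "\<And>q. prime q \<Longrightarrow> - rat_ord q r \<le> int (multiplicity q N)"
  shows "r \<ge> 1 / of_int N"
proof -
  obtain a b where qa: "quotient_of r = (a, b)" by (cases "quotient_of r") auto
  have b: "b > 0" using quotient_of_denom_pos[OF qa] .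
  have cop: "coprime a b" using quotient_of_coprime[OF qa] .
  have rr: "r = of_int a / of_int b" using quotient_of_div[OF qa] .
  have a: "a > 0" using assms(1) b rr by (simp add: zero_less_divide_iff)
  have "b dvd N"
  proof (rule multiplicity_le_imp_dvd)
    show "b \<noteq> 0" using b by simp
    fix q :: int assume q: "prime q"
    have "rat_ord q r = int (multiplicity q a) - int (multiplicity q b)"
      by (simp add: rat_ord_def qa)
    thus "multiplicity q b \<le> multiplicity q N"
      using assms(3)[OF q] coprime_mult_zero[OF q cop] by auto
  qed
  hence bN: "b \<le> N" using assms(2) by (simp add: zdvd_imp_le)
  have "1 / of_int N \<le> (1::rat) / of_int b" using bN b by (simp add: frac_le)
  also have "\<dots> \<le> of_int a / of_int b" using a b by (simp add: divide_right_mono)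
  finally show ?thesis using rr by simp
qed

lemma mult8: 
  fixes q x :: int assumes "prime q" "x \<noteq> 0"
  shows "multiplicity q (8 * x) = multiplicity q (8::int) + multiplicity q x"
  using assms by (intro prime_elem_multiplicity_mult_distrib) (auto intro: prime_imp_prime_elem)

lemma mult2_8: "multiplicity (2::int) 8 = 3"
proof -
  have "(8::int) = 2^3" by simp
  thus ?thesis using multiplicity_same_power[of "2::int" 3] by simp
qed



lemma T_bounds:
  fixes d q x y :: int
  assumes "prime q" "(x, y) \<in> T_set d q"
  shows "x \<le> int (multiplicity q (8::int)) + int (multiplicity q (d^2-1))"
    and "- y \<le> int (multiplicity q (8::int)) + int (multiplicity q d) + int (multiplicity q (d^2-1))"
  using assms(2) by (auto simp: T_set_def Let_def mult2_8 split: if_splits)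

theorem lemma5p3:
  fixes d :: int and \<alpha> \<beta> :: rat and l :: nat and y1 y2 :: int
  assumes "3 \<le> d" and "d \<le> 50"
    and "(\<alpha>, \<beta>) \<in> A_set d"
    and "prime l" and "l > 1000"
    and "4 * \<beta> * of_int y2 ^ l - \<alpha>^2 * of_int y1 ^ (2 * l) = of_int (d^2 - 1)"
    and "\<bar>y1\<bar> \<ge> 2" and "y2 \<ge> 2" and "y2 \<noteq> y1^2"
  shows "1 \<le> ln (real_of_int (max (y1^2) y2)) / ln (real_of_int (y1^2)) \<and>
         ln (real_of_int (max (y1^2) y2)) / ln (real_of_int (y1^2)) \<le> 1.03"
proof -
  have ap: "\<alpha> > 0" and bp: "\<beta> > 0"
    and T: "\<And>q. prime q \<Longrightarrow> (rat_ord q \<alpha>, rat_ord q \<beta>) \<in> T_set d q"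
    using assms(3) by (auto simp: A_set_def)
  have dd: "9 \<le> d * d" using mult_mono[of 3 d 3 d] assms(1) by simp
  have dd2: "d * d \<le> 2500" using mult_mono[of d 50 d 50] assms(1,2) by simp
  have sq: "d^2 = d * d" by (simp add: power2_eq_square)
  have ddd: "d * (d * d - 1) \<le> 50 * 2499" "0 < d * (d * d - 1)"
    using mult_mono[of d 50 "d*d-1" 2499] assms(1,2) dd dd2 by auto
  have d0: "d \<noteq> 0" and d1: "d^2 - 1 \<noteq> 0"
    using assms(1) dd sq by auto
  have "\<alpha> \<le> of_int (8 * (d^2 - 1))"
  proof (rule num_bound[OF ap])
    show "8 * (d^2 - 1) > 0" using dd sq ddd by simp
    fix q :: int assume q: "prime q"
    show "rat_ord q \<alpha> \<le> int (multiplicity q (8 * (d^2 - 1)))"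
      using T_bounds(1)[OF q T[OF q]] mult8[OF q d1] by simp
  qed
  hence aB: "real_of_rat \<alpha> \<le> 19992"
  proof -
    assume "\<alpha> \<le> of_int (8 * (d^2 - 1))"
    hence "real_of_rat \<alpha> \<le> of_int (8 * (d^2 - 1))"
      by (metis of_rat_less_eq of_rat_of_int_eq)
    moreover have "8 * (d^2 - 1) \<le> 19992" using dd dd2 sq by simp
    hence "real_of_int (8 * (d^2 - 1)) \<le> real_of_int 19992" by (simp only: of_int_le_iff)
    ultimately show ?thesis by simp
  qed
  have "\<beta> \<ge> 1 / of_int (8 * (d * (d^2 - 1)))"
  proof (rule den_bound[OF bp])
    show "8 * (d * (d^2 - 1)) > 0" using dd sq ddd by simp
    fix q :: int assume q: "prime q"
    have "multiplicity q (8 * (d * (d^2 - 1))) = multiplicity q (8::int) + multiplicity q d + multiplicity q (d^2-1)"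
      using mult8[OF q, of "d * (d^2 - 1)"] d0 d1 prime_elem_multiplicity_mult_distrib[OF prime_imp_prime_elem[OF q] d0 d1]
      by simp
    thus "- rat_ord q \<beta> \<le> int (multiplicity q (8 * (d * (d^2 - 1))))"
      using T_bounds(2)[OF q T[OF q]] by simp
  qed
  hence bB: "real_of_rat \<beta> \<ge> 1 / 999600"
  proof -
    assume h: "\<beta> \<ge> 1 / of_int (8 * (d * (d^2 - 1)))"
    have le: "8 * (d * (d^2 - 1)) \<le> 999600" "0 < 8 * (d * (d^2 - 1))" using dd dd2 sq ddd by simp_all
    have le': "rat_of_int (8 * (d * (d^2 - 1))) \<le> rat_of_int 999600" "rat_of_int 0 < rat_of_int (8 * (d * (d^2 - 1)))"
      using le by (simp only: of_int_le_iff of_int_less_iff)+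
    have "(1::rat) / 999600 \<le> 1 / of_int (8 * (d * (d^2 - 1)))"
      using le' by (intro divide_left_mono) simp_all
    hence "(1::rat) / 999600 \<le> \<beta>" using h by linarith
    hence "real_of_rat (1 / 999600) \<le> real_of_rat \<beta>" by (simp only: of_rat_less_eq)
    thus ?thesis by (simp add: of_rat_divide)
  qed
  define a where "a = real_of_rat \<alpha>"
  define b where "b = real_of_rat \<beta>"
  define Y where "Y = real_of_int y1 ^ 2"
  define Z where "Z = real_of_int y2"
  define D where "D = real_of_int (d^2 - 1)"
  have a0: "a > 0" using ap by (simp add: a_def)
  have b0: "b > 0" using bp by (simp add: b_def)
  have y14: "4 \<le> y1^2"
  proof -
    have "2 * 2 \<le> \<bar>y1\<bar> * \<bar>y1\<bar>" using mult_mono[of 2 "\<bar>y1\<bar>" 2 "\<bar>y1\<bar>"] assms(7) by simp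
    thus ?thesis by (simp add: power2_eq_square)
  qed
  have Yint: "Y = real_of_int (y1^2)" by (simp add: Y_def)
  have Y4: "Y \<ge> 4" using y14 unfolding Yint by linarith
  have Z2: "Z \<ge> 2" using assms(8) by (simp add: Z_def)
  have DBi: "d^2 - 1 \<le> 2499" "0 \<le> d^2 - 1" using dd dd2 sq by simp_all
  have "real_of_int (d^2 - 1) \<le> real_of_int 2499" "real_of_int 0 \<le> real_of_int (d^2 - 1)"
    using DBi by (simp only: of_int_le_iff)+
  hence DB: "D \<le> 2499" "D \<ge> 0" unfolding D_def by simp_all
  have eq: "4 * b * Z ^ l - a^2 * Y ^ l = D"
  proof -
    have "real_of_rat (4 * \<beta> * of_int y2 ^ l - \<alpha>^2 * of_int y1 ^ (2 * l)) = real_of_rat (of_int (d^2 - 1))"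
      using assms(6) by simp
    thus ?thesis unfolding a_def b_def Y_def Z_def D_def
      by (simp add: of_rat_diff of_rat_mult of_rat_power power_mult)
  qed
  have Yl: "Y ^ l \<ge> 1" using Y4 by (simp add: one_le_power)
  have "Z ^ l = (a^2 * Y^l + D) / (4 * b)" using eq b0 by (simp add: field_simps)
  also have "\<dots> \<le> (19992^2 * Y^l + 2499 * Y^l) * 999600 / 4"
  proof -
    have "a \<le> 19992" using aB by (simp add: a_def)
    hence "a^2 \<le> 19992^2" using a0 by (intro power_mono) auto
    hence n: "a^2 * Y^l + D \<le> 19992^2 * Y^l + 2499 * Y^l"
      using Yl DB by (smt (verit) mult_right_mono)
    have "1 / b \<le> 999600" using bB b0 unfolding b_def by (simp add: divide_le_eq field_simps)
    have "(a^2 * Y^l + D) / (4 * b) = (a^2 * Y^l + D) * (1 / b) / 4" by simp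
    also have "\<dots> \<le> (19992^2 * Y^l + 2499 * Y^l) * 999600 / 4"
      using n \<open>1 / b \<le> 999600\<close> a0 DB Yl b0
      by (intro divide_right_mono mult_mono) (auto intro!: add_nonneg_nonneg)
    finally show ?thesis .
  qed
  also have "\<dots> \<le> 2^47 * Y^l" using Yl by simp
  finally have ZB: "Z ^ l \<le> 2^47 * Y^l" .
  have lnZ: "real l * ln Z \<le> 47 * ln 2 + real l * ln Y"
  proof -
    have "ln (Z ^ l) \<le> ln (2^47 * Y^l)" using ZB Z2 Yl by (subst ln_le_cancel_iff) auto
    moreover have "ln ((2::real)^47 * Y^l) = ln ((2::real)^47) + ln (Y^l)"
      using Yl Y4 by (subst ln_mult) auto
    moreover have "ln ((2::real)^47) = real 47 * ln 2" by (rule ln_realpow)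
    moreover have "ln (Y^l) = real l * ln Y" by (rule ln_realpow)
    moreover have "ln (Z^l) = real l * ln Z" by (rule ln_realpow)
    ultimately show ?thesis by linarith
  qed
  have lnY: "ln Y \<ge> 2 * ln 2"
  proof -
    have "ln 4 \<le> ln Y" using Y4 by simp
    moreover have "ln (4::real) = 2 * ln 2" using ln_realpow[of 2 2] by simp
    ultimately show ?thesis by simp
  qed
  have ln2: "ln (2::real) > 0" by simp
  have lnYp: "ln Y > 0" using lnY ln2 by linarith
  have lge: "real l \<ge> 1001" using assms(5) by simp
  show ?thesis
  proof (cases "y2 \<le> y1^2")
    case True
    hence "max (y1^2) y2 = y1^2" by simp
    thus ?thesis using lnYp by (simp add: Y_def)
  next
    case False
    hence m: "max (y1^2) y2 = y2" by simp
    have "Y < Z" using False unfolding Yint Z_def by linarith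
    hence "ln Y \<le> ln Z" using Y4 by simp
    have "real l * ln Z \<le> real l * (1.03 * ln Y)"
    proof -
      have "47 * ln 2 \<le> real l * (0.03 * ln Y)"
      proof -
        have "47 * ln 2 \<le> 1001 * (0.03 * (2 * ln (2::real)))" using ln2 by simp
        also have "\<dots> \<le> real l * (0.03 * ln Y)" using lge lnY ln2
          by (intro mult_mono) auto
        finally show ?thesis .
      qed
      thus ?thesis using lnZ by (simp add: algebra_simps)
    qed
    hence "ln Z \<le> 1.03 * ln Y" using lge by simp
    thus ?thesis using m lnYp \<open>ln Y \<le> ln Z\<close>
      by (simp add: Y_def Z_def divide_le_eq le_divide_eq)
  qed
qed

end
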